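(* Let $n\ge 2$ be an integer, $A\subseteq L_n$, and let $B\subseteq L_n\setminus A$ be a closed uncountable subset of $(L_n,\tau_E|_{L_n})$. Then $(X_n,\tau(A))$ is neither normal nor countably paracompact.
   Context: For $\overline{x},\overline{a}\in\mathbb R^n$ let $|\overline{x}-\overline{a}|$ be the Euclidean distance and $B(\overline{a},\epsilon)=\{\overline{x}\in\mathbb R^n:|\overline{x}-\overline{a}|<\epsilon\}$. Let $P_n=\{\overline{x}\in\mathbb R^n: x_n>0\}$, $L_n=\{\overline{x}\in\mathbb R^n: x_n=0\}$, $X_n=P_n\cup L_n$, and let $\tau_E$ denote the Euclidean topology on $X_n$. For $\overline{a}\in L_n$ and $\epsilon>0$ put $\overline{a(\epsilon)}=(a_1,\dots,a_{n-1},\epsilon)$ and $\tilde B(\overline{a},\epsilon)=\{\overline{a}\}\cup B(\overline{a(\epsilon)},\epsilon)$. For $A\subseteq L_n$, the topology $\tau(A)$ on $X_n$ is generated by the local bases: at $\overline{a}\in P_n$, the sets $B(\overline{a},\epsilon)$ with $0<\epsilon<a_n$; at $\overline{a}\in A$, the sets $B(\overline{a},\epsilon)\cap X_n$ with $\epsilon>0$; at $\overline{a}\in L_n\setminus A$, the sets $\tilde B(\overline{a},\epsilon)$ with $\epsilon>0$. *)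

theory Defs
  imports "HOL-Analysis.Analysis"
begin

text \<open>Points of R^n are represented as pairs (x', x_n) in (real^'m) \<times> real, where
  n - 1 = CARD('m).  The product norm on this type is the Euclidean (L2) one,
  so ball p e is the Euclidean ball B(p,e).\<close>

definition Pn :: "((real^'m) \<times> real) set" where
  "Pn = {p. snd p > 0}"

definition Ln :: "((real^'m) \<times> real) set" where
  "Ln = {p. snd p = 0}"

definition Xn :: "((real^'m) \<times> real) set" where
  "Xn = Pn \<union> Ln"

definition tball :: "(real^'m) \<times> real \<Rightarrow> real \<Rightarrow> ((real^'m) \<times> real) set" where
  "tball a e = insert a (ball (fst a, e) e)"

definition tau_base :: "((real^'m) \<times> real) set \<Rightarrow> (real^'m) \<times> real
    \<Rightarrow> ((real^'m) \<times> real) set \<Rightarrow> bool" where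
  "tau_base A a U \<longleftrightarrow>
     (a \<in> Pn \<and> (\<exists>e. 0 < e \<and> e < snd a \<and> U = ball a e)) \<or>
     (a \<in> Ln \<inter> A \<and> (\<exists>e>0. U = ball a e \<inter> Xn)) \<or>
     (a \<in> Ln - A \<and> (\<exists>e>0. U = tball a e))"

definition tau :: "((real^'m) \<times> real) set \<Rightarrow> ((real^'m) \<times> real) topology" where
  "tau A = topology (\<lambda>U. U \<subseteq> Xn \<and> (\<forall>x\<in>U. \<exists>V. tau_base A x V \<and> V \<subseteq> U))"

definition countably_paracompact :: "'a topology \<Rightarrow> bool" where
  "countably_paracompact X \<longleftrightarrow>
     (\<forall>\<U>. countable \<U> \<and> (\<forall>U\<in>\<U>. openin X U) \<and> \<Union>\<U> = topspace X \<longrightarrow>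
        (\<exists>\<V>. (\<forall>V\<in>\<V>. openin X V) \<and> \<Union>\<V> = topspace X \<and>
              (\<forall>V\<in>\<V>. \<exists>U\<in>\<U>. V \<subseteq> U) \<and> locally_finite_in X \<V>))"

lemma tball_mono:
  assumes "e \<le> e'" shows "tball a e \<subseteq> tball a e'"
proof
  fix y assume "y \<in> tball a e"
  then consider "y = a" | "dist (fst a, e) y < e" by (auto simp: tball_def)
  then show "y \<in> tball a e'"
  proof cases
    case 2
    have "dist (fst a, e') (fst a, e) = e' - e"
      using assms by (simp add: dist_Pair_Pair dist_real_def)
    then have "dist (fst a, e') y \<le> (e' - e) + dist (fst a, e) y"
      by (metis dist_triangle)
    with 2 show ?thesis by (simp add: tball_def)
  qed (simp add: tball_def)
qed

lemma tau_base_P: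
  "a \<in> Pn \<Longrightarrow> tau_base A a U \<longleftrightarrow> (\<exists>e. 0 < e \<and> e < snd a \<and> U = ball a e)"
  unfolding tau_base_def Pn_def Ln_def by auto

lemma tau_base_A:
  "a \<in> Ln \<inter> A \<Longrightarrow> tau_base A a U \<longleftrightarrow> (\<exists>e>0. U = ball a e \<inter> Xn)"
  unfolding tau_base_def Pn_def Ln_def by auto

lemma tau_base_LA:
  "a \<in> Ln - A \<Longrightarrow> tau_base A a U \<longleftrightarrow> (\<exists>e>0. U = tball a e)"
  unfolding tau_base_def Pn_def Ln_def by auto

lemma tau_base_directed:
  assumes U: "tau_base A a U" and V: "tau_base A a V"
  shows "\<exists>W. tau_base A a W \<and> W \<subseteq> U \<inter> V"
proof (cases "a \<in> Pn")
  case True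
  obtain e1 where e1: "0<e1" "e1 < snd a" "U = ball a e1" using tau_base_P[OF True, of A U] U by auto
  obtain e2 where e2: "0<e2" "e2 < snd a" "V = ball a e2" using tau_base_P[OF True, of A V] V by auto
  have "tau_base A a (ball a (min e1 e2))"
    unfolding tau_base_P[OF True] using e1 e2 by (intro exI[of _ "min e1 e2"]) simp
  moreover have "ball a (min e1 e2) \<subseteq> U \<inter> V" using e1 e2 by (simp add: subset_ball)
  ultimately show ?thesis by blast
next
  case nP: False
  have "a \<in> Pn \<or> a \<in> Ln" using U unfolding tau_base_def by (elim disjE conjE) simp_all
  then have "a \<in> Ln" using nP by simp
  show ?thesis
  proof (cases "a \<in> A")
    case True
    then have aA: "a \<in> Ln \<inter> A" using \<open>a \<in> Ln\<close> by blast
    obtain e1 where e1: "0<e1" "U = ball a e1 \<inter> Xn" using tau_base_A[OF aA, of U] U by auto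
    obtain e2 where e2: "0<e2" "V = ball a e2 \<inter> Xn" using tau_base_A[OF aA, of V] V by auto
    have "tau_base A a (ball a (min e1 e2) \<inter> Xn)"
      unfolding tau_base_A[OF aA] using e1 e2 by (intro exI[of _ "min e1 e2"]) simp
    moreover have "ball a (min e1 e2) \<subseteq> ball a e1" "ball a (min e1 e2) \<subseteq> ball a e2"
      by (simp_all add: subset_ball)
    then have "ball a (min e1 e2) \<inter> Xn \<subseteq> U \<inter> V" using e1 e2 by blast
    ultimately show ?thesis by blast
  next
    case False
    then have aA: "a \<in> Ln - A" using \<open>a \<in> Ln\<close> by blast
    obtain e1 where e1: "0<e1" "U = tball a e1" using tau_base_LA[OF aA, of U] U by auto
    obtain e2 where e2: "0<e2" "V = tball a e2" using tau_base_LA[OF aA, of V] V by auto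
    have "tau_base A a (tball a (min e1 e2))"
      unfolding tau_base_LA[OF aA] using e1 e2 by (intro exI[of _ "min e1 e2"]) simp
    moreover have "tball a (min e1 e2) \<subseteq> U \<inter> V"
      using tball_mono[of "min e1 e2" e1 a] tball_mono[of "min e1 e2" e2 a] e1 e2 by simp
    ultimately show ?thesis by blast
  qed
qed

lemma tau_open_Int:
  assumes S: "S \<subseteq> Xn \<and> (\<forall>x\<in>S. \<exists>V. tau_base A x V \<and> V \<subseteq> S)"
     and T: "T \<subseteq> Xn \<and> (\<forall>x\<in>T. \<exists>V. tau_base A x V \<and> V \<subseteq> T)"
  shows "S \<inter> T \<subseteq> Xn \<and> (\<forall>x\<in>S \<inter> T. \<exists>V. tau_base A x V \<and> V \<subseteq> S \<inter> T)"
proof -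
  have "S \<inter> T \<subseteq> Xn" using S by auto
  moreover have "\<exists>V. tau_base A x V \<and> V \<subseteq> S \<inter> T" if x: "x \<in> S \<inter> T" for x
  proof -
    obtain U where U: "tau_base A x U" "U \<subseteq> S" using S x by auto
    obtain V where V: "tau_base A x V" "V \<subseteq> T" using T x by auto
    obtain W where W: "tau_base A x W" "W \<subseteq> U \<inter> V" using tau_base_directed[OF U(1) V(1)] by auto
    show ?thesis using U(2) V(2) W by blast
  qed
  ultimately show ?thesis by simp
qed

lemma tau_open_Union:
  assumes K: "\<forall>U\<in>K. U \<subseteq> Xn \<and> (\<forall>x\<in>U. \<exists>V. tau_base A x V \<and> V \<subseteq> U)"
  shows "\<Union>K \<subseteq> Xn \<and> (\<forall>x\<in>\<Union>K. \<exists>V. tau_base A x V \<and> V \<subseteq> \<Union>K)"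
proof -
  have "\<Union>K \<subseteq> Xn" using K by auto
  moreover have "\<exists>V. tau_base A x V \<and> V \<subseteq> \<Union>K" if x: "x \<in> \<Union>K" for x
  proof -
    obtain U where U: "U \<in> K" "x \<in> U" using x by auto
    obtain V where V: "tau_base A x V" "V \<subseteq> U" using bspec[OF K U(1)] U(2) by blast
    show ?thesis using U V by auto
  qed
  ultimately show ?thesis by simp
qed

lemma istopology_tau:
  "istopology (\<lambda>U. U \<subseteq> Xn \<and> (\<forall>x\<in>U. \<exists>V. tau_base A x V \<and> V \<subseteq> U))"
  unfolding istopology_def using tau_open_Int[of _ A] tau_open_Union[of _ A] by simp

lemma openin_tau:
  "openin (tau A) U \<longleftrightarrow> U \<subseteq> Xn \<and> (\<forall>x\<in>U. \<exists>V. tau_base A x V \<and> V \<subseteq> U)"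
  unfolding tau_def using istopology_tau[of A] by (simp add: topology_inverse')

end

theory Submission
  imports Defs
begin

lemma ball_up_Pn:
  assumes "e > 0" shows "ball (u, e) e \<subseteq> Pn"
proof
  fix y assume "y \<in> ball (u, e) e"
  then have "dist (snd (u,e)) (snd y) < e" using dist_snd_le[of "(u,e)" y] by simp
  then show "y \<in> Pn" unfolding Pn_def by (auto simp: dist_real_def)
qed

lemma Pn_Ln_disj: "Pn \<inter> Ln = {}" unfolding Pn_def Ln_def by auto

lemma ball_Pn:
  assumes "x \<in> Pn" shows "ball x (snd x / 2) \<subseteq> Pn"
proof
  fix y assume "y \<in> ball x (snd x / 2)"
  then have "dist (snd x) (snd y) < snd x / 2" using dist_snd_le[of x y] by simp
  then have "\<bar>snd x - snd y\<bar> < snd x / 2" by (simp add: dist_real_def)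
  moreover have "snd x > 0" using assms by (simp add: Pn_def)
  ultimately have "snd y > 0" using abs_less_iff[of "snd x - snd y" "snd x/2"] by linarith
  then show "y \<in> Pn" unfolding Pn_def by simp
qed

lemma tball_sub_Xn:
  assumes "a \<in> Ln" "e > 0" shows "tball a e \<subseteq> Xn"
  using ball_up_Pn[OF assms(2), of "fst a"] assms(1) unfolding tball_def Xn_def by auto

lemma open_Xn: fixes A :: "((real^'m) \<times> real) set" shows "openin (tau A) Xn"
  unfolding openin_tau
proof (intro conjI ballI)
  fix x :: "(real^'m) \<times> real" assume x: "x \<in> Xn"
  show "\<exists>V. tau_base A x V \<and> V \<subseteq> Xn"
  proof (cases "x \<in> Pn")
    case True
    then have "snd x > 0" by (simp add: Pn_def)
    then have "tau_base A x (ball x (snd x / 2))" using True by (auto simp: tau_base_P intro!: exI[of _ "snd x/2"])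
    then show ?thesis using ball_Pn[OF True] by (auto simp: Xn_def)
  next
    case False
    then have xL: "x \<in> Ln" using x by (simp add: Xn_def)
    show ?thesis
    proof (cases "x \<in> A")
      case True
      then have "tau_base A x (ball x 1 \<inter> Xn)" using xL by (auto simp: tau_base_A intro!: exI[of _ 1])
      then show ?thesis by blast
    next
      case False
      then have "tau_base A x (tball x 1)" using xL by (auto simp: tau_base_LA intro!: exI[of _ 1])
      then show ?thesis using tball_sub_Xn[OF xL, of 1] by auto
    qed
  qed
qed simp

lemma topspace_tau: fixes A :: "((real^'m) \<times> real) set" shows "topspace (tau A) = Xn"
proof
  show "topspace (tau A) \<subseteq> Xn" using openin_topspace[of "tau A"] unfolding openin_tau by blast
  show "Xn \<subseteq> topspace (tau A)" using openin_subset[OF open_Xn] .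
qed

lemma tball_in_open:
  assumes "openin (tau A) W" "a \<in> W" "a \<in> Ln - A"
  shows "\<exists>r>0. tball a r \<subseteq> W"
proof -
  obtain V where "tau_base A a V" "V \<subseteq> W" using assms unfolding openin_tau by blast
  then show ?thesis using tau_base_LA[OF assms(3)] by auto
qed

lemma tball_in_open_nat:
  assumes "openin (tau A) W" "a \<in> W" "a \<in> Ln - A"
  shows "\<exists>k::nat. tball a (1 / Suc k) \<subseteq> W"
proof -
  obtain r where r: "r > 0" "tball a r \<subseteq> W" using tball_in_open[OF assms] by blast
  obtain k where "inverse (real (Suc k)) < r" using r(1) reals_Archimedean by blast
  then have "tball a (1 / Suc k) \<subseteq> tball a r" by (intro tball_mono) (simp add: field_simps)
  then show ?thesis using r by blast
qed

lemma tball_meet: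
  fixes a b :: "real^'m"
  assumes "dist a b < min r q" "r > 0" "q > 0"
  shows "tball (a,0) r \<inter> tball (b,0) q \<noteq> {}"
proof -
  define t where "t = min r q"
  have t: "0 < t" "t \<le> r" "t \<le> q" using assms by (auto simp: t_def)
  have d: "dist a b < t" using assms by (simp add: t_def)
  have 1: "dist (a, r) (a, t) < r"
    using t by (simp add: dist_Pair_Pair dist_real_def)
  have "(dist b a)^2 < t^2" using d zero_le_dist[of a b] by (simp add: dist_commute power_strict_mono)
  moreover have "t*t \<le> q*t" using t by (intro mult_right_mono) auto
  moreover have "(q - t)^2 = q^2 - 2*q*t + t^2" by (simp add: power2_diff)
  ultimately have "(dist b a)^2 + (q - t)^2 < q^2" unfolding power2_eq_square by linarith
  then have "sqrt ((dist b a)^2 + (q - t)^2) < sqrt (q^2)" by (rule real_sqrt_less_mono)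
  then have 2: "dist (b, q) (a, t) < q"
    using t by (simp add: dist_Pair_Pair dist_real_def dist_commute)
  show ?thesis using 1 2 unfolding tball_def by auto
qed

lemma closed_sub_B:
  fixes A B S :: "((real^'m) \<times> real) set"
  assumes B: "B \<subseteq> Ln - A" "closedin (subtopology euclidean Ln) B" and S: "S \<subseteq> B"
  shows "closedin (tau A) S"
proof -
  obtain T where T: "closed T" "B = T \<inter> Ln" using B(2) unfolding closedin_closed by blast
  have SL: "S \<subseteq> Ln" using S B(1) by auto
  have "openin (tau A) (Xn - S)"
    unfolding openin_tau
  proof (intro conjI ballI)
    fix x :: "(real^'m) \<times> real" assume x: "x \<in> Xn - S"
    show "\<exists>V. tau_base A x V \<and> V \<subseteq> Xn - S"
    proof (cases "x \<in> Pn")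
      case True
      then have "snd x > 0" by (simp add: Pn_def)
      then have "tau_base A x (ball x (snd x / 2))" using True by (auto simp: tau_base_P intro!: exI[of _ "snd x/2"])
      moreover have "ball x (snd x / 2) \<subseteq> Xn - S" using ball_Pn[OF True] SL Pn_Ln_disj unfolding Xn_def by blast
      ultimately show ?thesis by blast
    next
      case False
      then have xL: "x \<in> Ln" using x by (simp add: Xn_def)
      show ?thesis
      proof (cases "x \<in> A")
        case True
        then have "x \<notin> T" using T(2) B(1) xL by blast
        moreover have "open (- T)" using T(1) by (simp add: closed_def)
        moreover have "x \<in> - T" using \<open>x \<notin> T\<close> by simp
        ultimately obtain e where e: "e > 0" "ball x e \<subseteq> - T" unfolding open_contains_ball by blast
        then have "tau_base A x (ball x e \<inter> Xn)" using xL True by (auto simp: tau_base_A intro!: exI[of _ e])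
        moreover have "ball x e \<inter> Xn \<subseteq> Xn - S" using e(2) S T(2) by blast
        ultimately show ?thesis by blast
      next
        case False
        then have "tau_base A x (tball x 1)" using xL by (auto simp: tau_base_LA intro!: exI[of _ 1])
        moreover have "tball x 1 \<subseteq> Xn - S"
        proof
          fix y assume y: "y \<in> tball x 1"
          have "y \<in> Xn" using tball_sub_Xn[OF xL, of 1] y by auto
          moreover have "y \<notin> S"
          proof (cases "y = x")
            case False
            then have "y \<in> ball (fst x, 1) 1" using y unfolding tball_def by simp
            then have "y \<in> Pn" using ball_up_Pn[of 1 "fst x"] by auto
            then show ?thesis using SL Pn_Ln_disj by auto
          qed (use x in simp)
          ultimately show "y \<in> Xn - S" by simp
        qed
        ultimately show ?thesis by blast
      qed
    qed
  qed auto
  moreover have "S \<subseteq> Xn" using SL unfolding Xn_def by blast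
  ultimately show ?thesis unfolding closedin_def topspace_tau by blast
qed

lemma baire_cover:
  fixes K :: "'a::euclidean_space set"
  assumes "closed K" "K \<noteq> {}" "countable \<F>" "K \<subseteq> \<Union>\<F>"
  shows "\<exists>F\<in>\<F>. \<exists>x\<in>K. \<exists>e>0. K \<inter> ball x e \<subseteq> closure F"
proof (rule ccontr)
  assume neg: "\<not> ?thesis"
  have Fne: "\<F> \<noteq> {}" using assms(2,4) by auto
  define G where "G = (\<lambda>F. K - closure F) ` \<F>"
  have "K \<subseteq> closure (\<Inter>G)"
  proof (rule Baire[OF assms(1)])
    show "countable G" using assms(3) by (simp add: G_def)
    fix T assume "T \<in> G"
    then obtain F where F: "F \<in> \<F>" "T = K - closure F" by (auto simp: G_def)
    have "K - closure F = K \<inter> (- closure F)" by blast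
    then have "openin (top_of_set K) T" unfolding F(2)
      by (metis openin_open_Int open_Compl closed_closure)
    moreover have "K \<subseteq> closure T"
    proof
      fix y assume y: "y \<in> K"
      show "y \<in> closure T" unfolding closure_approachable
      proof (intro allI impI)
        fix e :: real assume "e > 0"
        then have "\<not> K \<inter> ball y e \<subseteq> closure F" using neg F(1) y by blast
        then obtain z where "z \<in> K" "z \<in> ball y e" "z \<notin> closure F" by blast
        then show "\<exists>z\<in>T. dist z y < e" using F(2) by (auto simp: dist_commute)
      qed
    qed
    ultimately show "openin (top_of_set K) T \<and> K \<subseteq> closure T" by blast
  qed
  moreover have "\<Inter>G = {}"
  proof -
    { fix z assume z: "z \<in> \<Inter>G"
      obtain F0 where "F0 \<in> \<F>" using Fne by blast
      then have "z \<in> K" using z unfolding G_def by blast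
      then obtain F where "F \<in> \<F>" "z \<in> F" using assms(4) by blast
      then have False using z closure_subset[of F] unfolding G_def by blast }
    then show ?thesis by blast
  qed
  ultimately show False using assms(2) by simp
qed

lemma kernel:
  fixes C :: "'a::euclidean_space set"
  assumes "closed C" "uncountable C"
  obtains K where "closed K" "K \<subseteq> C" "K \<noteq> {}"
    "\<And>x e. x \<in> K \<Longrightarrow> e > 0 \<Longrightarrow> uncountable (K \<inter> ball x e)"
proof -
  obtain \<B> :: "'a set set" where Bc: "countable \<B>" "\<And>C. C \<in> \<B> \<Longrightarrow> open C"
     "\<And>S. open S \<Longrightarrow> \<exists>U. U \<subseteq> \<B> \<and> S = \<Union>U" using univ_second_countable by blast
  define K where "K = {x \<in> C. \<forall>e>0. uncountable (C \<inter> ball x e)}"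
  have cnt: "countable (C - K)"
  proof -
    have "C - K \<subseteq> \<Union>((\<lambda>b. C \<inter> b) ` {b \<in> \<B>. countable (C \<inter> b)})"
    proof
      fix x assume x: "x \<in> C - K"
      then obtain e where e: "e > 0" "countable (C \<inter> ball x e)" by (auto simp: K_def)
      obtain U where U: "U \<subseteq> \<B>" "ball x e = \<Union>U" using Bc(3)[of "ball x e"] by auto
      then obtain b where b: "b \<in> U" "x \<in> b" using e(1) by (metis UnionE centre_in_ball)
      have "b \<subseteq> ball x e" using U(2) b(1) by blast
      then have "countable (C \<inter> b)" using e(2) countable_subset[of "C \<inter> b" "C \<inter> ball x e"] by blast
      then show "x \<in> \<Union>((\<lambda>b. C \<inter> b) ` {b \<in> \<B>. countable (C \<inter> b)})" using x b U(1) by auto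
    qed
    moreover have "countable (\<Union>((\<lambda>b. C \<inter> b) ` {b \<in> \<B>. countable (C \<inter> b)}))"
      using Bc(1) by (intro countable_UN) auto
    ultimately show ?thesis using countable_subset by blast
  qed
  have unc: "uncountable (K \<inter> ball x e)" if "x \<in> K" "e > 0" for x e
  proof
    assume "countable (K \<inter> ball x e)"
    then have "countable ((K \<inter> ball x e) \<union> (C - K))" using cnt by simp
    moreover have "C \<inter> ball x e \<subseteq> (K \<inter> ball x e) \<union> (C - K)" by auto
    ultimately have "countable (C \<inter> ball x e)" using countable_subset by blast
    then show False using that by (auto simp: K_def)
  qed
  have "closure K \<subseteq> K"
  proof
    fix x assume x: "x \<in> closure K"
    have "K \<subseteq> C" by (auto simp: K_def)
    then have "x \<in> C" using x closure_mono[of K C] assms(1) closure_closed by blast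
    moreover have "uncountable (C \<inter> ball x e)" if "e > 0" for e
    proof -
      obtain y where y: "y \<in> K" "dist y x < e/2" using x \<open>e>0\<close> unfolding closure_approachable
        by (meson half_gt_zero)
      have "C \<inter> ball y (e/2) \<subseteq> C \<inter> ball x e"
      proof
        fix z assume z: "z \<in> C \<inter> ball y (e/2)"
        then have "dist y z < e/2" by simp
        then have "dist x z < e" using dist_triangle[of x z y] y(2) by (simp add: dist_commute)
        then show "z \<in> C \<inter> ball x e" using z by simp
      qed
      moreover have "uncountable (C \<inter> ball y (e/2))" using y(1) \<open>e>0\<close> by (auto simp: K_def)
      ultimately show ?thesis using countable_subset by blast
    qed
    ultimately show "x \<in> K" by (auto simp: K_def)
  qed
  then have "closed K" using closure_subset_eq by blast
  moreover have "K \<noteq> {}" using cnt assms(2) by auto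
  moreover have "K \<subseteq> C" unfolding K_def by blast
  ultimately show ?thesis using that unc by blast
qed

lemma dense_sub:
  fixes K :: "'a::euclidean_space set"
  obtains Q where "countable Q" "Q \<subseteq> K" "\<And>W. open W \<Longrightarrow> K \<inter> W \<noteq> {} \<Longrightarrow> \<exists>q\<in>Q. q \<in> W"
proof -
  obtain \<B> :: "'a set set" where Bc: "countable \<B>" "\<And>C. C \<in> \<B> \<Longrightarrow> open C"
     "\<And>S. open S \<Longrightarrow> \<exists>U. U \<subseteq> \<B> \<and> S = \<Union>U" using univ_second_countable by blast
  define Q where "Q = (\<lambda>b. SOME y. y \<in> K \<inter> b) ` {b\<in>\<B>. K \<inter> b \<noteq> {}}"
  have "countable Q" unfolding Q_def using Bc(1) by simp
  moreover have "Q \<subseteq> K"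
  proof
    fix q assume "q \<in> Q"
    then obtain b where b: "K \<inter> b \<noteq> {}" "q = (SOME y. y \<in> K \<inter> b)" unfolding Q_def by blast
    have "\<exists>y. y \<in> K \<inter> b" using b(1) by blast
    then have "q \<in> K \<inter> b" unfolding b(2) by (rule someI_ex)
    then show "q \<in> K" by simp
  qed
  moreover have "\<exists>q\<in>Q. q \<in> W" if W: "open W" "K \<inter> W \<noteq> {}" for W
  proof -
    obtain y where y: "y \<in> K" "y \<in> W" using W(2) by blast
    obtain U where U: "U \<subseteq> \<B>" "W = \<Union>U" using Bc(3)[OF W(1)] by blast
    then obtain b where b: "b \<in> U" "y \<in> b" using y(2) by blast
    have bB: "b \<in> \<B>" "K \<inter> b \<noteq> {}" using b y U(1) by auto
    define q where "q = (SOME y. y \<in> K \<inter> b)"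
    have "q \<in> Q" unfolding Q_def q_def using bB by blast
    moreover have "\<exists>y. y \<in> K \<inter> b" using bB(2) by blast
    then have "q \<in> K \<inter> b" unfolding q_def by (rule someI_ex)
    then have "q \<in> W" using U(2) b(1) by blast
    ultimately show ?thesis by blast
  qed
  ultimately show ?thesis using that by blast
qed

lemma setup_KQ:
  fixes A B :: "((real^'m) \<times> real) set"
  assumes "A \<subseteq> Ln" and B: "B \<subseteq> Ln - A" "closedin (subtopology euclidean Ln) B" "uncountable B"
  obtains K Q :: "(real^'m) set" where "closed K" "K \<noteq> {}"
    "\<And>x e. x \<in> K \<Longrightarrow> e > 0 \<Longrightarrow> uncountable (K \<inter> ball x e)"
    "\<And>c. c \<in> K \<Longrightarrow> (c,0) \<in> Ln - A"
    "\<And>S. S \<subseteq> K \<Longrightarrow> closedin (tau A) ((\<lambda>c. (c,0)) ` S)"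
    "countable Q" "Q \<subseteq> K" "\<And>W. open W \<Longrightarrow> K \<inter> W \<noteq> {} \<Longrightarrow> \<exists>q\<in>Q. q \<in> W"
proof -
  obtain T where T: "closed T" "B = T \<inter> Ln" using B(2) unfolding closedin_closed by blast
  define C where "C = {c. (c, 0::real) \<in> B}"
  have BC: "B = (\<lambda>c. (c,0)) ` C"
  proof
    show "B \<subseteq> (\<lambda>c. (c,0)) ` C"
    proof
      fix p assume p: "p \<in> B"
      then have "snd p = 0" using B(1) by (auto simp: Ln_def)
      then have "p = (fst p, 0)" by (metis prod.collapse)
      moreover have "fst p \<in> C" using p \<open>p = (fst p, 0)\<close> unfolding C_def by simp
      ultimately show "p \<in> (\<lambda>c. (c,0)) ` C" by (rule image_eqI)
    qed
  qed (auto simp: C_def)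
  have L0: "\<And>c. (c, 0::real) \<in> Ln" by (simp add: Ln_def)
  have "C = (\<lambda>c. (c, 0::real)) -` T" unfolding C_def T(2) using L0 by blast
  moreover have "closed ((\<lambda>c. (c, 0::real)) -` T)"
    by (intro continuous_closed_vimage T(1)) (intro continuous_intros)
  ultimately have Ccl: "closed C" by simp
  have Cunc: "uncountable C"
  proof
    assume "countable C"
    then have "countable B" unfolding BC by simp
    then show False using B(3) by simp
  qed
  obtain K where K: "closed K" "K \<subseteq> C" "K \<noteq> {}"
    "\<And>x e. x \<in> K \<Longrightarrow> e > 0 \<Longrightarrow> uncountable (K \<inter> ball x e)" using kernel[OF Ccl Cunc] by blast
  obtain Q where Q: "countable Q" "Q \<subseteq> K" "\<And>W. open W \<Longrightarrow> K \<inter> W \<noteq> {} \<Longrightarrow> \<exists>q\<in>Q. q \<in> W"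
    using dense_sub by blast
  have LA: "(c,0) \<in> Ln - A" if "c \<in> K" for c using that K(2) B(1) unfolding C_def by blast
  have CL: "closedin (tau A) ((\<lambda>c. (c,0)) ` S)" if "S \<subseteq> K" for S
    by (rule closed_sub_B[OF B(1,2)]) (use that K(2) in \<open>auto simp: C_def\<close>)
  show ?thesis using that[OF K(1,3,4) LA CL Q] by blast
qed

lemma unc_not_sub_finite:
  assumes "uncountable X" "finite F" shows "\<not> X \<subseteq> F"
  using assms countable_finite finite_subset by blast

lemma not_normal:
  fixes A :: "((real^'m) \<times> real) set" and K Q :: "(real^'m) set"
  assumes Kcl: "closed K" and Kne: "K \<noteq> {}"
    and Kunc: "\<And>x e. x \<in> K \<Longrightarrow> e > 0 \<Longrightarrow> uncountable (K \<inter> ball x e)"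
    and LA: "\<And>c. c \<in> K \<Longrightarrow> (c,0) \<in> Ln - A"
    and CL: "\<And>S. S \<subseteq> K \<Longrightarrow> closedin (tau A) ((\<lambda>c. (c,0)) ` S)"
    and Qc: "countable Q" and QK: "Q \<subseteq> K" and Qd: "\<And>W. open W \<Longrightarrow> K \<inter> W \<noteq> {} \<Longrightarrow> \<exists>q\<in>Q. q \<in> W"
  shows "\<not> normal_space (tau A)"
proof
  assume nor: "normal_space (tau A)"
  let ?e = "\<lambda>c::real^'m. (c, 0::real)"
  have c1: "closedin (tau A) (?e ` Q)" using CL QK by blast
  have c2: "closedin (tau A) (?e ` (K - Q))" using CL by blast
  have c3: "disjnt (?e ` Q) (?e ` (K - Q))" unfolding disjnt_def by auto
  have "\<exists>U V. openin (tau A) U \<and> openin (tau A) V \<and> ?e ` Q \<subseteq> U \<and> ?e ` (K - Q) \<subseteq> V \<and> disjnt U V"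
    using nor[unfolded normal_space_def, rule_format, OF conjI[OF c1 conjI[OF c2 c3]]] .
  then obtain U V where UV: "openin (tau A) U" "openin (tau A) V" "?e ` Q \<subseteq> U"
      "?e ` (K - Q) \<subseteq> V" "disjnt U V" by blast
  define F where "F = (\<lambda>k::nat. {c \<in> K - Q. tball (c,0) (1 / Suc k) \<subseteq> V})"
  define \<F> where "\<F> = range F \<union> (\<lambda>q. {q}) ` Q"
  have "countable \<F>" unfolding \<F>_def using Qc by simp
  moreover have "K \<subseteq> \<Union>\<F>"
  proof
    fix c assume c: "c \<in> K"
    show "c \<in> \<Union>\<F>"
    proof (cases "c \<in> Q")
      case True then show ?thesis unfolding \<F>_def by blast
    next
      case False
      then have "(c,0) \<in> V" using UV(4) c by blast
      then obtain k where "tball (c,0) (1 / Suc k) \<subseteq> V" using tball_in_open_nat[OF UV(2) _ LA[OF c]] by blast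
      then have "c \<in> F k" unfolding F_def using c False by blast
      then show ?thesis unfolding \<F>_def by blast
    qed
  qed
  ultimately obtain G x e where G: "G \<in> \<F>" and x: "x \<in> K" and e: "e > 0" and sub: "K \<inter> ball x e \<subseteq> closure G"
    using baire_cover[OF Kcl Kne] by blast
  show False
  proof (cases "G \<in> range F")
    case False
    then obtain q where "G = {q}" using G unfolding \<F>_def by blast
    then have "K \<inter> ball x e \<subseteq> {q}" using sub by simp
    then show False using unc_not_sub_finite[OF Kunc[OF x e]] by blast
  next
    case True
    then obtain k where Gk: "G = F k" by blast
    have "K \<inter> ball x e \<noteq> {}" using x e by (metis IntI centre_in_ball empty_iff)
    then obtain q where q: "q \<in> Q" "q \<in> ball x e" using Qd[of "ball x e"] by blast
    have qK: "q \<in> K" using q QK by blast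
    then have "q \<in> closure (F k)" using sub q Gk by blast
    obtain r where r: "r > 0" "tball (q,0) r \<subseteq> U"
      using tball_in_open[OF UV(1) _ LA[OF qK]] UV(3) q(1) by blast
    have "min (1 / Suc k) r > 0" using r by simp
    then obtain c where c: "c \<in> F k" "dist c q < min (1 / Suc k) r"
      using \<open>q \<in> closure (F k)\<close> unfolding closure_approachable by blast
    have "tball (c,0) (1 / Suc k) \<inter> tball (q,0) r \<noteq> {}" by (rule tball_meet) (use c r in auto)
    moreover have "tball (c,0) (1 / Suc k) \<subseteq> V" using c(1) unfolding F_def by blast
    ultimately show False using r UV(5) unfolding disjnt_def by blast
  qed
qed

lemma not_cp:
  fixes A :: "((real^'m) \<times> real) set" and K Q :: "(real^'m) set"
  assumes Kcl: "closed K" and Kne: "K \<noteq> {}"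
    and Kunc: "\<And>x e. x \<in> K \<Longrightarrow> e > 0 \<Longrightarrow> uncountable (K \<inter> ball x e)"
    and LA: "\<And>c. c \<in> K \<Longrightarrow> (c,0) \<in> Ln - A"
    and CL: "\<And>S. S \<subseteq> K \<Longrightarrow> closedin (tau A) ((\<lambda>c. (c,0)) ` S)"
    and Qc: "countable Q" and QK: "Q \<subseteq> K" and Qd: "\<And>W. open W \<Longrightarrow> K \<inter> W \<noteq> {} \<Longrightarrow> \<exists>q\<in>Q. q \<in> W"
  shows "\<not> countably_paracompact (tau A)"
proof
  assume cp: "countably_paracompact (tau A)"
  have ball_ne: "K \<inter> ball x e \<noteq> {}" if "x \<in> K" "e > 0" for x e
    using that by (metis IntI centre_in_ball empty_iff)
  have Qinf: "infinite Q"
  proof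
    assume fQ: "finite Q"
    obtain x where x: "x \<in> K" using Kne by blast
    have "\<not> K \<inter> ball x 1 \<subseteq> Q" using unc_not_sub_finite[OF Kunc[OF x] fQ] by simp
    then have "K \<inter> (- Q) \<noteq> {}" by blast
    moreover have "open (- Q)" using fQ by (simp add: finite_imp_closed open_Compl)
    ultimately show False using Qd[of "- Q"] by blast
  qed
  define qn where "qn = from_nat_into Q"
  have bij: "bij_betw qn UNIV Q" unfolding qn_def by (rule bij_betw_from_nat_into[OF Qc Qinf])
  then have qn_inj: "qn i = qn j \<longleftrightarrow> i = j" for i j by (auto simp: bij_betw_def inj_def)
  have qn_Q: "qn i \<in> Q" for i using bij by (auto simp: bij_betw_def)
  have qn_K: "qn i \<in> K" for i using qn_Q QK by blast
  have Q_qn: "\<exists>i. q = qn i" if "q \<in> Q" for q using bij that unfolding bij_betw_def by (metis imageE)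
  define P where "P = (\<lambda>j. (\<lambda>i. (qn i, 0::real)) ` {j..})"
  have P_eq: "P j = (\<lambda>c. (c,0)) ` (qn ` {j..})" for j unfolding P_def by auto
  define Uc where "Uc = (\<lambda>j. Xn - P j)"
  have Uc_open: "openin (tau A) (Uc j)" for j
  proof -
    have "closedin (tau A) (P j)" unfolding P_eq using CL qn_K by blast
    then show ?thesis unfolding Uc_def closedin_def topspace_tau by blast
  qed
  have Xn_topsp: "topspace (tau A) = Xn" by (rule topspace_tau)
  have qXn: "(qn i, 0) \<in> Xn" for i using LA[OF qn_K[of i]] unfolding Xn_def by blast
  have Uc_cover: "\<Union>(range Uc) = topspace (tau A)"
  proof
    show "\<Union>(range Uc) \<subseteq> topspace (tau A)" unfolding Xn_topsp Uc_def by blast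
    show "topspace (tau A) \<subseteq> \<Union>(range Uc)"
    proof
      fix p assume p: "p \<in> topspace (tau A)"
      show "p \<in> \<Union>(range Uc)"
      proof (cases "\<exists>i. p = (qn i, 0)")
        case True
        then obtain i where i: "p = (qn i, 0)" by blast
        have "p \<notin> P (Suc i)" unfolding P_def i using qn_inj by auto
        then have "p \<in> Uc (Suc i)" unfolding Uc_def using p Xn_topsp by blast
        then show ?thesis by blast
      next
        case False
        then have "p \<notin> P 0" unfolding P_def by blast
        then have "p \<in> Uc 0" unfolding Uc_def using p Xn_topsp by blast
        then show ?thesis by blast
      qed
    qed
  qed
  have "countable (range Uc) \<and> (\<forall>U\<in>range Uc. openin (tau A) U) \<and> \<Union>(range Uc) = topspace (tau A)"
    using Uc_open Uc_cover by blast
  then have "\<exists>\<V>. (\<forall>V\<in>\<V>. openin (tau A) V) \<and> \<Union>\<V> = topspace (tau A) \<and>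
              (\<forall>V\<in>\<V>. \<exists>U\<in>range Uc. V \<subseteq> U) \<and> locally_finite_in (tau A) \<V>"
    using cp[unfolded countably_paracompact_def, rule_format] by blast
  then obtain \<V> where V: "\<forall>V\<in>\<V>. openin (tau A) V" "\<Union>\<V> = topspace (tau A)"
      "\<forall>V\<in>\<V>. \<exists>U\<in>range Uc. V \<subseteq> U" "locally_finite_in (tau A) \<V>"
    by blast
  have exW: "\<forall>i. \<exists>W. W \<in> \<V> \<and> (qn i, 0) \<in> W" using V(2) qXn Xn_topsp by blast
  obtain W where "\<forall>i. W i \<in> \<V> \<and> (qn i, 0) \<in> W i" using choice[OF exW] by blast
  then have W: "\<And>i. W i \<in> \<V>" "\<And>i. (qn i, 0) \<in> W i" by auto
  have exr: "\<forall>i. \<exists>r>0. tball (qn i, 0) r \<subseteq> W i"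
    using tball_in_open[OF _ W(2) LA[OF qn_K]] V(1) W(1) by blast
  obtain \<epsilon> where "\<forall>i. \<epsilon> i > 0 \<and> tball (qn i, 0) (\<epsilon> i) \<subseteq> W i" using choice[OF exr] by blast
  then have eps: "\<And>i. \<epsilon> i > 0" "\<And>i. tball (qn i, 0) (\<epsilon> i) \<subseteq> W i" by auto
  have finV: "finite {i. (qn i, 0) \<in> V}" if "V \<in> \<V>" for V
  proof -
    have "\<exists>U\<in>range Uc. V \<subseteq> U" using V(3) that by (rule bspec)
    then obtain j where "V \<subseteq> Uc j" by (auto simp del: Uc_def)
    have "{i. (qn i, 0) \<in> V} \<subseteq> {..<j}"
    proof
      fix i assume "i \<in> {i. (qn i, 0) \<in> V}"
      then have "(qn i, 0) \<in> Uc j" using \<open>V \<subseteq> Uc j\<close> by auto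
      then have ni: "(qn i, 0) \<notin> P j" unfolding Uc_def by simp
      show "i \<in> {..<j}"
      proof (rule ccontr)
        assume "i \<notin> {..<j}"
        then have "i \<in> {j..}" by simp
        then have "(qn i, 0) \<in> P j" unfolding P_def by (rule imageI)
        then show False using ni by contradiction
      qed
    qed
    then show ?thesis by (rule finite_subset) simp
  qed
  define G where "G = (\<lambda>(k::nat, N::nat). {c \<in> K - Q. \<forall>i\<ge>N. tball (c,0) (1 / Suc k) \<inter> tball (qn i,0) (\<epsilon> i) = {}})"
  define \<F> where "\<F> = range G \<union> (\<lambda>q. {q}) ` Q"
  have "countable \<F>" unfolding \<F>_def using Qc by simp
  moreover have "K \<subseteq> \<Union>\<F>"
  proof
    fix c assume c: "c \<in> K"
    show "c \<in> \<Union>\<F>"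
    proof (cases "c \<in> Q")
      case True then show ?thesis unfolding \<F>_def by blast
    next
      case False
      have cX: "(c,0) \<in> topspace (tau A)" using LA[OF c] Xn_topsp unfolding Xn_def by blast
      obtain N0 where N0: "openin (tau A) N0" "(c,0) \<in> N0" "finite {U \<in> \<V>. U \<inter> N0 \<noteq> {}}"
        using V(4) cX unfolding locally_finite_in_def by blast
      obtain k where k: "tball (c,0) (1 / Suc k) \<subseteq> N0" using tball_in_open_nat[OF N0(1,2) LA[OF c]] by blast
      define I where "I = {i. tball (c,0) (1 / Suc k) \<inter> tball (qn i,0) (\<epsilon> i) \<noteq> {}}"
      have "I \<subseteq> (\<Union>V\<in>{U \<in> \<V>. U \<inter> N0 \<noteq> {}}. {i. (qn i, 0) \<in> V})"
      proof
        fix i assume "i \<in> I"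
        then obtain z where z: "z \<in> tball (c,0) (1 / Suc k)" "z \<in> tball (qn i,0) (\<epsilon> i)"
          unfolding I_def by blast
        then have "z \<in> W i" "z \<in> N0" using k eps(2)[of i] by auto
        then have "W i \<in> {U \<in> \<V>. U \<inter> N0 \<noteq> {}}" using W(1)[of i] by blast
        moreover have "i \<in> {i. (qn i, 0) \<in> W i}" using W(2)[of i] by simp
        ultimately show "i \<in> (\<Union>V\<in>{U \<in> \<V>. U \<inter> N0 \<noteq> {}}. {i. (qn i, 0) \<in> V})"
          apply (simp only: UN_iff)
          apply (rule bexI[of _ "W i"])
          using W(2)[of i] apply simp
          apply assumption
          done
      qed
      moreover have "finite (\<Union>V\<in>{U \<in> \<V>. U \<inter> N0 \<noteq> {}}. {i. (qn i, 0) \<in> V})"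
        by (rule finite_UN_I[OF N0(3)]) (simp add: finV)
      ultimately have "finite I" by (rule finite_subset)
      then have "\<exists>m. \<forall>n\<in>I. n < m" using finite_nat_set_iff_bounded[of I] by simp
      then obtain N where N: "\<forall>i\<in>I. i < N" by blast
      have "c \<in> G (k, N)" unfolding G_def using c False N unfolding I_def by force
      then show ?thesis unfolding \<F>_def by blast
    qed
  qed
  ultimately obtain H x e where H: "H \<in> \<F>" and x: "x \<in> K" and e: "e > 0" and sub: "K \<inter> ball x e \<subseteq> closure H"
    using baire_cover[OF Kcl Kne] by blast
  show False
  proof (cases "H \<in> range G")
    case False
    then obtain q where "H = {q}" using H unfolding \<F>_def by blast
    then have "K \<inter> ball x e \<subseteq> {q}" using sub by simp
    then show False using unc_not_sub_finite[OF Kunc[OF x e]] by blast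
  next
    case True
    then obtain k N where Gk: "H = G (k, N)" by auto
    define W0 where "W0 = ball x e - qn ` {..<N}"
    have "open W0" unfolding W0_def by (intro open_Diff finite_imp_closed) auto
    moreover have "K \<inter> W0 \<noteq> {}"
    proof
      assume "K \<inter> W0 = {}"
      then have "K \<inter> ball x e \<subseteq> qn ` {..<N}" unfolding W0_def by blast
      then show False using unc_not_sub_finite[OF Kunc[OF x e]] by blast
    qed
    ultimately obtain q where q: "q \<in> Q" "q \<in> W0" using Qd by blast
    then obtain i where i: "q = qn i" using Q_qn by blast
    have iN: "i \<ge> N" using q(2) unfolding W0_def i by force
    have "q \<in> closure (G (k, N))" using sub q QK Gk unfolding W0_def by blast
    have "min (1 / Suc k) (\<epsilon> i) > 0" using eps(1)[of i] by simp
    then obtain c where c: "c \<in> G (k, N)" "dist c q < min (1 / Suc k) (\<epsilon> i)"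
      using \<open>q \<in> closure (G (k, N))\<close> unfolding closure_approachable by blast
    have "tball (c,0) (1 / Suc k) \<inter> tball (qn i,0) (\<epsilon> i) \<noteq> {}"
      by (rule tball_meet) (use c eps(1)[of i] i in auto)
    moreover have "tball (c,0) (1 / Suc k) \<inter> tball (qn i,0) (\<epsilon> i) = {}"
      using c(1) iN unfolding G_def by blast
    ultimately show False by blast
  qed
qed

theorem mainTheorem8:
  fixes A B :: "((real^'m) \<times> real) set"
  assumes "A \<subseteq> Ln"
    and "B \<subseteq> Ln - A"
    and "closedin (subtopology euclidean Ln) B"
    and "uncountable B"
  shows "\<not> normal_space (tau A) \<and> \<not> countably_paracompact (tau A)"
proof -
  obtain K Q :: "(real^'m) set" where KQ: "closed K" "K \<noteq> {}"
    "\<And>x e. x \<in> K \<Longrightarrow> e > 0 \<Longrightarrow> uncountable (K \<inter> ball x e)"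
    "\<And>c. c \<in> K \<Longrightarrow> (c,0) \<in> Ln - A"
    "\<And>S. S \<subseteq> K \<Longrightarrow> closedin (tau A) ((\<lambda>c. (c,0)) ` S)"
    "countable Q" "Q \<subseteq> K" "\<And>W. open W \<Longrightarrow> K \<inter> W \<noteq> {} \<Longrightarrow> \<exists>q\<in>Q. q \<in> W"
    using setup_KQ[OF assms] by blast
  show ?thesis using not_normal[OF KQ] not_cp[OF KQ] by blast
qed

end
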